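(* Let $\alpha \in [0,1)$ and $k \in \{0,\dots,m-1\}$. For the homogeneous sample $\mathbf{S}_k = (S_k,\dots,S_k) \in \Omega$, $$B^*(\mathbf{S}_k) = S_{\min}\left(1 - \sqrt[n]{\alpha}\right) + S_k \sqrt[n]{\alpha},$$ where $B^*(\mathbf{S}_k)$ is the highest value assigned to $\mathbf{S}_k$ by any valid bound.
   Context: Fix integers $m \ge 2$, $n \ge 1$ and reals $S_{\min} < S_{\max}$; $S = \{S_0,\dots,S_{m-1}\}$ with $S_k = S_{\min} + k\frac{S_{\max}-S_{\min}}{m-1}$. $\mathcal{F}$ is the set of probability distributions on $S$; $E[F]$ is the mean. $\Omega$ is the set of samples of size $n$ from $S$, identified with their sorted versions. For $F \in \mathcal{F}$, $\mathbf{X}$ denotes a sample of $n$ i.i.d. draws from $F$. A bound is a function $B:\Omega\to\mathbb{R}$; it is valid (at level $1-\alpha$) if $P_F[B(\mathbf{X}) \le E[F]] \ge 1-\alpha$ for every $F \in \mathcal{F}$. *)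

theory Defs
  imports Main "HOL-Library.Multiset" "HOL-Library.FuncSet" Complex_Main
begin

definition grid :: "nat \<Rightarrow> real \<Rightarrow> real \<Rightarrow> nat \<Rightarrow> real" where
  "grid m Smin Smax k = Smin + real k * (Smax - Smin) / (real m - 1)"

text \<open>A distribution F on S, given by its probability mass p k on S_k, k < m.\<close>
definition is_distr :: "nat \<Rightarrow> (nat \<Rightarrow> real) \<Rightarrow> bool" where
  "is_distr m p \<longleftrightarrow> (\<forall>k<m. 0 \<le> p k) \<and> (\<Sum>k<m. p k) = 1"

definition mean :: "nat \<Rightarrow> real \<Rightarrow> real \<Rightarrow> (nat \<Rightarrow> real) \<Rightarrow> real" where
  "mean m Smin Smax p = (\<Sum>k<m. p k * grid m Smin Smax k)"

text \<open>Samples (sorted, i.e. unordered) of size n are represented as multisets of indices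
  into S; an ordered i.i.d. draw is a function x : {0..<n} -> {0..<m}.\<close>
definition sample_of :: "nat \<Rightarrow> (nat \<Rightarrow> nat) \<Rightarrow> nat multiset" where
  "sample_of n x = image_mset x (mset_set {0..<n})"

text \<open>P_F[B(X) \<le> E[F]] for X consisting of n i.i.d. draws from F.\<close>
definition prob_below_mean ::
  "nat \<Rightarrow> nat \<Rightarrow> real \<Rightarrow> real \<Rightarrow> (nat multiset \<Rightarrow> real) \<Rightarrow> (nat \<Rightarrow> real) \<Rightarrow> real" where
  "prob_below_mean m n Smin Smax B p =
     (\<Sum>x \<in> {0..<n} \<rightarrow>\<^sub>E {0..<m}.
        (if B (sample_of n x) \<le> mean m Smin Smax p then (\<Prod>i<n. p (x i)) else 0))"

definition valid_bound ::
  "nat \<Rightarrow> nat \<Rightarrow> real \<Rightarrow> real \<Rightarrow> real \<Rightarrow> (nat multiset \<Rightarrow> real) \<Rightarrow> bool" where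
  "valid_bound m n Smin Smax \<alpha> B \<longleftrightarrow>
     (\<forall>p. is_distr m p \<longrightarrow> prob_below_mean m n Smin Smax B p \<ge> 1 - \<alpha>)"

definition hom_sample :: "nat \<Rightarrow> nat \<Rightarrow> nat multiset" where
  "hom_sample n k = replicate_mset n k"

end

theory Submission
  imports Defs
begin

lemma remove_eq:
  fixes w :: "'a \<Rightarrow> real"
  assumes "finite T" "c \<in> T"
  shows "sum (\<lambda>x. if x = c then 0 else w x) T = sum w T - w c"
proof -
  have "sum (\<lambda>x. if x = c then 0 else w x) (T - {c}) = sum w (T - {c})"
    by (rule sum.cong) auto
  thus ?thesis using sum.remove[OF assms, of w] sum.remove[OF assms, of "\<lambda>x. if x = c then 0 else w x"]
    by simp
qed

lemma total_mass:
  fixes n :: nat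
  assumes "is_distr m p"
  shows "(\<Sum>x \<in> {0..<n} \<rightarrow>\<^sub>E {0..<m}. \<Prod>i<n. p (x i)) = 1"
proof -
  have "(\<Sum>x \<in> {0..<n} \<rightarrow>\<^sub>E {0..<m}. \<Prod>i<n. p (x i))
      = (\<Sum>x \<in> {0..<n} \<rightarrow>\<^sub>E {0..<m}. \<Prod>i\<in>{0..<n}. p (x i))"
    by (intro sum.cong refl prod.cong) auto
  also have "\<dots> = (\<Prod>i\<in>{0..<n}. \<Sum>j\<in>{0..<m}. p j)"
    by (rule prod_sum_PiE[symmetric]) auto
  also have "\<dots> = 1" using assms by (simp add: is_distr_def atLeast0LessThan)
  finally show ?thesis .
qed

lemma weight_nonneg:
  fixes n :: nat
  assumes "is_distr m p" "x \<in> {0..<n} \<rightarrow>\<^sub>E {0..<m}"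
  shows "0 \<le> (\<Prod>i<n. p (x i))"
proof (intro prod_nonneg)
  fix i assume "i \<in> {..<n}"
  then have "x i < m" using assms(2) by (auto simp: PiE_def Pi_def)
  then show "0 \<le> p (x i)" using assms(1) by (simp add: is_distr_def)
qed

lemma const_in:
  fixes k :: nat
  assumes "k < m"
  shows "restrict (\<lambda>_. k) {0..<n} \<in> {0..<n} \<rightarrow>\<^sub>E {0..<m}"
  using assms by auto

lemma const_weight:
  "(\<Prod>i<n. p (restrict (\<lambda>_. k) {0..<n} i)) = p k ^ n"
  by simp

lemma sample_const: "sample_of n (restrict (\<lambda>_. k) {0..<n}) = hom_sample n k"
proof -
  have "image_mset (restrict (\<lambda>_. k) {0..<n}) (mset_set {0..<n}) = image_mset (\<lambda>_. k) (mset_set {0..<n})"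
    by (intro image_mset_cong) auto
  thus ?thesis by (simp add: sample_of_def hom_sample_def image_mset_const_eq)
qed

lemma sample_inj:
  assumes "x \<in> {0..<n} \<rightarrow>\<^sub>E {0..<m}" "sample_of n x = hom_sample n k"
  shows "x = restrict (\<lambda>_. k) {0..<n}"
proof (rule ext)
  fix i
  show "x i = restrict (\<lambda>_. k) {0..<n} i"
  proof (cases "i < n")
    case True
    have "x i \<in># sample_of n x" using True by (simp add: sample_of_def)
    then have "x i \<in># replicate_mset n k" using assms(2) by (simp add: hom_sample_def)
    then show ?thesis using True by (simp split: if_splits)
  next
  case False then show ?thesis using assms(1) by (auto simp: PiE_def extensional_def)
  qed
qed

lemma grid_ge:
  assumes "m \<ge> 2" "Smin < Smax"
  shows "Smin \<le> grid m Smin Smax j"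
proof -
  have "real m - 1 > 0" using assms by simp
  then have "0 \<le> real j * (Smax - Smin) / (real m - 1)" using assms by simp
  thus ?thesis by (simp add: grid_def)
qed

lemma mean_ge:
  assumes "m \<ge> 2" "Smin < Smax" "is_distr m p" "k < m"
  shows "Smin + p k * (grid m Smin Smax k - Smin) \<le> mean m Smin Smax p"
proof -
  have "p k * (grid m Smin Smax k - Smin) \<le> (\<Sum>j<m. p j * (grid m Smin Smax j - Smin))"
    using assms grid_ge[OF assms(1,2)]
    by (intro member_le_sum[where f="\<lambda>j. p j * (grid m Smin Smax j - Smin)"]) (auto simp: is_distr_def)
  also have "\<dots> = mean m Smin Smax p - Smin * (\<Sum>j<m. p j)"
    by (simp add: mean_def algebra_simps sum_subtractf sum_distrib_left)
  also have "\<dots> = mean m Smin Smax p - Smin" using assms(3) by (simp add: is_distr_def)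
  finally show ?thesis by simp
qed

theorem theorem2:
  fixes m n k :: nat and Smin Smax \<alpha> :: real
  assumes "m \<ge> 2" "n \<ge> 1" "Smin < Smax"
    and "0 \<le> \<alpha>" "\<alpha> < 1" "k < m"
  shows "(\<exists>B. valid_bound m n Smin Smax \<alpha> B \<and>
            B (hom_sample n k) = Smin * (1 - root n \<alpha>) + grid m Smin Smax k * root n \<alpha>)
       \<and> (\<forall>B. valid_bound m n Smin Smax \<alpha> B \<longrightarrow>
            B (hom_sample n k) \<le> Smin * (1 - root n \<alpha>) + grid m Smin Smax k * root n \<alpha>)"
proof -
  define r where "r = root n \<alpha>"
  define d where "d = grid m Smin Smax k - Smin"
  define v where "v = Smin * (1 - root n \<alpha>) + grid m Smin Smax k * root n \<alpha>"
  have v: "v = Smin + r * d" unfolding v_def r_def d_def by (simp add: algebra_simps)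
  have d0: "0 \<le> d" using grid_ge[OF assms(1,3)] by (simp add: d_def)
  have n0: "0 < n" using assms by simp
  have rn: "r ^ n = \<alpha>" using n0 assms(4) by (simp add: r_def)
  have r0: "0 \<le> r" using assms(4) n0 by (simp add: r_def)
  have r1: "r < 1" using assms(5) n0 by (simp add: r_def)
  define T where "T = {0..<n} \<rightarrow>\<^sub>E {0..<m}"
  define c where "c = restrict (\<lambda>_. k) {0..<n}"
  have cT: "c \<in> T" unfolding c_def T_def using const_in[OF assms(6)] .
  have finT: "finite T" unfolding T_def by (simp add: finite_PiE)
  have part1: "\<exists>B. valid_bound m n Smin Smax \<alpha> B \<and> B (hom_sample n k) = v"
  proof -
    define B where "B = (\<lambda>s. if s = hom_sample n k then v else Smin)"
    have e: "B (hom_sample n k) = v" by (simp add: B_def)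
    have "valid_bound m n Smin Smax \<alpha> B"
      unfolding valid_bound_def
    proof (intro allI impI)
      fix p assume p: "is_distr m p"
      let ?w = "\<lambda>x. \<Prod>i<n. p (x i)"
      let ?M = "mean m Smin Smax p"
      have tot: "sum ?w T = 1" using total_mass[OF p] by (simp add: T_def)
      have mg: "Smin + p k * d \<le> ?M" using mean_ge[OF assms(1,3) p assms(6)] by (simp add: d_def)
      have pk0: "0 \<le> p k" using p assms(6) by (simp add: is_distr_def)
      have Sle: "Smin \<le> ?M" using mg pk0 d0 by (smt (verit) mult_nonneg_nonneg)
      have other: "B (sample_of n x) \<le> ?M" if "x \<in> T" "x \<noteq> c" for x
      proof -
        have "sample_of n x \<noteq> hom_sample n k"
          using sample_inj[of x n m k] that by (auto simp: T_def c_def)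
        thus ?thesis using Sle by (simp add: B_def)
      qed
      show "prob_below_mean m n Smin Smax B p \<ge> 1 - \<alpha>"
      proof (cases "v \<le> ?M")
        case True
        have "\<forall>x\<in>T. B (sample_of n x) \<le> ?M"
        proof
          fix x assume "x \<in> T"
          show "B (sample_of n x) \<le> ?M"
          proof (cases "x = c")
            case True
            then show ?thesis using \<open>v \<le> ?M\<close> by (simp add: B_def c_def sample_const)
          qed (use other \<open>x \<in> T\<close> in auto)
        qed
        then have "prob_below_mean m n Smin Smax B p = sum ?w T"
          unfolding prob_below_mean_def T_def[symmetric] by (intro sum.cong) auto
        then show ?thesis using tot assms(4) by simp
      next
        case False
        have "\<not> r < p k"
        proof
          assume "r < p k"
          then have "r * d \<le> p k * d" using d0 by (simp add: mult_right_mono)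
          then show False using False mg v by simp
        qed
        then have "p k ^ n \<le> \<alpha>" using rn pk0 by (metis not_less power_mono)
        have "sum (\<lambda>x. if x = c then 0 else ?w x) T \<le> prob_below_mean m n Smin Smax B p"
          unfolding prob_below_mean_def T_def[symmetric]
          by (intro sum_mono) (use other weight_nonneg[OF p] in \<open>auto simp: T_def\<close>)
        moreover have "sum (\<lambda>x. if x = c then 0 else ?w x) T = sum ?w T - ?w c"
          by (rule remove_eq[OF finT cT])
        moreover have "?w c = p k ^ n" by (simp add: c_def)
        ultimately show ?thesis using tot \<open>p k ^ n \<le> \<alpha>\<close> by simp
      qed
    qed
    then show ?thesis using e by blast
  qed
  have part2: "B (hom_sample n k) \<le> v" if vb: "valid_bound m n Smin Smax \<alpha> B" for B
  proof (rule ccontr)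
    assume "\<not> B (hom_sample n k) \<le> v"
    then have Bv: "v < B (hom_sample n k)" by simp
    obtain q where q: "r < q" "q \<le> 1" "Smin + q * d < B (hom_sample n k)"
    proof (cases "d = 0")
      case True then show ?thesis using that[of 1] r1 Bv v by simp
    next
      case False
      then have dp: "0 < d" using d0 by simp
      define q where "q = min 1 ((r + (B (hom_sample n k) - Smin) / d) / 2)"
      have a: "r < (B (hom_sample n k) - Smin) / d" using Bv v dp by (simp add: field_simps)
      have "q * d \<le> ((r + (B (hom_sample n k) - Smin) / d) / 2) * d"
        using dp by (intro mult_right_mono) (simp_all only: q_def min.cobounded2 less_imp_le)
      also have "\<dots> = (r * d + (B (hom_sample n k) - Smin)) / 2" using dp by (simp add: field_simps)
      also have "\<dots> < B (hom_sample n k) - Smin" using Bv v by (simp add: mult.commute)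
      finally have "Smin + q * d < B (hom_sample n k)" by simp
      moreover have "r < q" unfolding q_def using a r1 by simp
      moreover have "q \<le> 1" by (simp add: q_def)
      ultimately show ?thesis using that by blast
    qed
    define p where "p = (\<lambda>j. (if j = k then q else 0) + (if j = 0 then 1 - q else (0::real)))"
    have "(\<Sum>j<m. p j) = q + (1 - q)"
      using assms(1,6) by (simp add: p_def sum.distrib)
    moreover have "\<forall>j<m. 0 \<le> p j" using q r0 by (simp add: p_def)
    ultimately have p: "is_distr m p" by (simp add: is_distr_def)
    have "mean m Smin Smax p = (\<Sum>j<m. (if j = k then q * grid m Smin Smax k else 0)
                 + (if j = 0 then (1 - q) * grid m Smin Smax 0 else 0))"
      unfolding mean_def by (intro sum.cong) (auto simp: p_def algebra_simps)
    also have "\<dots> = q * grid m Smin Smax k + (1 - q) * grid m Smin Smax 0"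
      using assms(1,6) by (simp add: sum.distrib)
    also have "\<dots> = Smin + q * d" by (simp add: grid_def d_def algebra_simps)
    finally have mB: "mean m Smin Smax p < B (hom_sample n k)" using q by simp
    let ?w = "\<lambda>x. \<Prod>i<n. p (x i)"
    have tot: "sum ?w T = 1" using total_mass[OF p] by (simp add: T_def)
    have "prob_below_mean m n Smin Smax B p \<le> sum (\<lambda>x. if x = c then 0 else ?w x) T"
      unfolding prob_below_mean_def T_def[symmetric]
    proof (intro sum_mono)
      fix x assume x: "x \<in> T"
      show "(if B (sample_of n x) \<le> mean m Smin Smax p then ?w x else 0) \<le> (if x = c then 0 else ?w x)"
        using mB weight_nonneg[OF p, of x n] x by (auto simp: c_def sample_const T_def)
    qed
    moreover have "sum (\<lambda>x. if x = c then 0 else ?w x) T = sum ?w T - ?w c"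
      by (rule remove_eq[OF finT cT])
    moreover have "?w c = p k ^ n" by (simp add: c_def)
    moreover have "\<alpha> < p k ^ n"
    proof -
      have "\<alpha> < q ^ n" using rn r0 q(1) n0 by (metis power_strict_mono)
      also have "q ^ n \<le> p k ^ n" using r0 q by (intro power_mono) (auto simp: p_def)
      finally show ?thesis .
    qed
    moreover have "prob_below_mean m n Smin Smax B p \<ge> 1 - \<alpha>" using vb p by (simp add: valid_bound_def)
    ultimately show False using tot by simp
  qed
  show ?thesis using part1 part2 unfolding v_def by blast
qed

end
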